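(* Let $S$ be an $X$-generated $F$-inverse monoid with greatest group image $G$, and let $w\in\mathbb{I}\mathfrak{m}_X$. Then a term $u\in\mathbb{I}\mathfrak{m}_X$ labels a journey in the $F$-Schützenberger graph $F\Gamma(w)$ from $1$ to $w_G$ if and only if $u_S\ge w_S$ in the natural partial order of $S$.
   Context: An $F$-inverse monoid is an inverse monoid in which every $\sigma$-class has a greatest element in the natural partial order, viewed as an algebra in signature $(\cdot,1,{}^{-1},{}^{\mathfrak m})$ with $s^{\mathfrak m}$ the greatest element of the $\sigma$-class of $s$; it is $X$-generated via $\iota:X\to S$ if $\iota(X)$ generates it in this signature, and then $G=S/\sigma$ is $X$-generated via $\sigma^\sharp\circ\iota$. $\mathbb{I}\mathfrak{m}_X$ is the set of formal terms $u_0v_1^{\mathfrak m}u_1\cdots v_n^{\mathfrak m}u_n$ ($u_i,v_i\in(X\cup X^{-1})^*$), and $w_S$, $w_G$ denote values. $\Gamma_X$ is the Cayley graph of $G$ (vertices $G$, edge labeled $x$ from $g$ to $gx_G$ for $x\in X\cup X^{-1}$, with the obvious involution on edges); subgraphs are closed under endpoints and inverses. The journey labeled $w=u_0v_1^{\mathfrak m}u_1\cdots v_n^{\mathfrak m}u_n$ starting at $g$ is $g\overline w=(g\overline{u_0}, g(u_0v_1)_G\overline{u_1},\dots,g(u_0v_1\cdots u_{n-1}v_n)_G\overline{u_n})$ where $h\overline u$ is the path from $h$ labeled by the word $u$; $\langle g\overline w\rangle$ is the union of the subgraphs spanned by these paths; $w$ labels a journey in $\Delta$ from $g$ to $h$ if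 $gw_G=h$ and $\langle g\overline w\rangle\subseteq\Delta$; $\overline w=1\overline w$. A subgraph $\Delta$ is $c_S$-closed if for all $u,v\in\mathbb{I}\mathfrak{m}_X$ with $u_S=v_S$ and all $g,h\in V(\Delta)$, $u$ labels a journey in $\Delta$ from $g$ to $h$ iff $v$ does; $\Delta^{c_S}$ is the intersection of all $c_S$-closed subgraphs containing $\Delta$. The $F$-Schützenberger graph of $w$ is $F\Gamma(w)=\langle\overline w\rangle^{c_S}$. *)

theory Defs
  imports Main
begin

text \<open>The carrier of the monoid is the whole type 's.\<close>
record 's FIM =
  smul :: "'s \<Rightarrow> 's \<Rightarrow> 's"
  sone :: 's
  sinv :: "'s \<Rightarrow> 's"
  smax :: "'s \<Rightarrow> 's"

definition inverse_monoid :: "('s, 'z) FIM_scheme \<Rightarrow> bool" where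
  "inverse_monoid S \<longleftrightarrow>
     (\<forall>a b c. smul S (smul S a b) c = smul S a (smul S b c)) \<and>
     (\<forall>a. smul S (sone S) a = a \<and> smul S a (sone S) = a) \<and>
     (\<forall>a. smul S (smul S a (sinv S a)) a = a \<and> smul S (smul S (sinv S a) a) (sinv S a) = sinv S a) \<and>
     (\<forall>a b. smul S (smul S a b) a = a \<and> smul S (smul S b a) b = b \<longrightarrow> b = sinv S a)"

definition nat_le :: "('s, 'z) FIM_scheme \<Rightarrow> 's \<Rightarrow> 's \<Rightarrow> bool" where
  "nat_le S a b \<longleftrightarrow> (\<exists>e. smul S e e = e \<and> a = smul S e b)"

definition sigma :: "('s, 'z) FIM_scheme \<Rightarrow> 's \<Rightarrow> 's \<Rightarrow> bool" where
  "sigma S a b \<longleftrightarrow> (\<exists>c. nat_le S c a \<and> nat_le S c b)"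

definition F_inverse_monoid :: "('s, 'z) FIM_scheme \<Rightarrow> bool" where
  "F_inverse_monoid S \<longleftrightarrow> inverse_monoid S \<and>
     (\<forall>s. sigma S (smax S s) s \<and> (\<forall>t. sigma S t s \<longrightarrow> nat_le S t (smax S s)))"

inductive_set gen_by :: "('s, 'z) FIM_scheme \<Rightarrow> 's set \<Rightarrow> 's set" for S A where
  base: "a \<in> A \<Longrightarrow> a \<in> gen_by S A"
| one: "sone S \<in> gen_by S A"
| mul: "a \<in> gen_by S A \<Longrightarrow> b \<in> gen_by S A \<Longrightarrow> smul S a b \<in> gen_by S A"
| inv: "a \<in> gen_by S A \<Longrightarrow> sinv S a \<in> gen_by S A"
| max: "a \<in> gen_by S A \<Longrightarrow> smax S a \<in> gen_by S A"

definition X_generated :: "('s, 'z) FIM_scheme \<Rightarrow> 'x set \<Rightarrow> ('x \<Rightarrow> 's) \<Rightarrow> bool" where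
  "X_generated S X \<iota> \<longleftrightarrow> gen_by S (\<iota> ` X) = UNIV"

text \<open>A letter (x, False) stands for x, (x, True) for the formal inverse x^{-1}.\<close>
type_synonym 'x letter = "'x \<times> bool"
type_synonym 'x word = "'x letter list"
text \<open>A term u0 v1^m u1 ... vn^m un is represented as (u0, [(v1,u1),...,(vn,un)]).\<close>
type_synonym 'x fterm = "'x word \<times> ('x word \<times> 'x word) list"

definition word_over :: "'x set \<Rightarrow> 'x word \<Rightarrow> bool" where
  "word_over X u \<longleftrightarrow> fst ` set u \<subseteq> X"

definition term_over :: "'x set \<Rightarrow> 'x fterm \<Rightarrow> bool" where
  "term_over X w \<longleftrightarrow> word_over X (fst w) \<and>
     (\<forall>p \<in> set (snd w). word_over X (fst p) \<and> word_over X (snd p))"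

fun flip :: "'x letter \<Rightarrow> 'x letter" where
  "flip (x, b) = (x, \<not> b)"

fun lval :: "('s, 'z) FIM_scheme \<Rightarrow> ('x \<Rightarrow> 's) \<Rightarrow> 'x letter \<Rightarrow> 's" where
  "lval S \<iota> (x, b) = (if b then sinv S (\<iota> x) else \<iota> x)"

definition wval :: "('s, 'z) FIM_scheme \<Rightarrow> ('x \<Rightarrow> 's) \<Rightarrow> 'x word \<Rightarrow> 's" where
  "wval S \<iota> u = foldr (\<lambda>a r. smul S (lval S \<iota> a) r) u (sone S)"

definition tval :: "('s, 'z) FIM_scheme \<Rightarrow> ('x \<Rightarrow> 's) \<Rightarrow> 'x fterm \<Rightarrow> 's" where
  "tval S \<iota> w = smul S (wval S \<iota> (fst w))
     (foldr (\<lambda>p r. smul S (smul S (smax S (wval S \<iota> (fst p))) (wval S \<iota> (snd p))) r) (snd w) (sone S))"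

definition cls :: "('s, 'z) FIM_scheme \<Rightarrow> 's \<Rightarrow> 's set" where
  "cls S s = {t. sigma S s t}"

definition grp :: "('s, 'z) FIM_scheme \<Rightarrow> 's set set" where
  "grp S = range (cls S)"

definition gmul :: "('s, 'z) FIM_scheme \<Rightarrow> 's set \<Rightarrow> 's set \<Rightarrow> 's set" where
  "gmul S g h = cls S (smul S (SOME a. g = cls S a) (SOME b. h = cls S b))"

definition gw :: "('s, 'z) FIM_scheme \<Rightarrow> ('x \<Rightarrow> 's) \<Rightarrow> 'x word \<Rightarrow> 's set" where
  "gw S \<iota> u = cls S (wval S \<iota> u)"

type_synonym ('s, 'x) edge = "'s set \<times> 'x letter \<times> 's set"
type_synonym ('s, 'x) graph = "'s set set \<times> ('s, 'x) edge set"

definition cayley_edges :: "('s, 'z) FIM_scheme \<Rightarrow> 'x set \<Rightarrow> ('x \<Rightarrow> 's) \<Rightarrow> ('s, 'x) edge set" where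
  "cayley_edges S X \<iota> = {(g, a, gmul S g (cls S (lval S \<iota> a))) | g a. g \<in> grp S \<and> fst a \<in> X}"

definition gsub :: "('s, 'x) graph \<Rightarrow> ('s, 'x) graph \<Rightarrow> bool" where
  "gsub D1 D2 \<longleftrightarrow> fst D1 \<subseteq> fst D2 \<and> snd D1 \<subseteq> snd D2"

definition gunion :: "('s, 'x) graph \<Rightarrow> ('s, 'x) graph \<Rightarrow> ('s, 'x) graph" where
  "gunion D1 D2 = (fst D1 \<union> fst D2, snd D1 \<union> snd D2)"

definition is_subgraph :: "('s, 'z) FIM_scheme \<Rightarrow> 'x set \<Rightarrow> ('x \<Rightarrow> 's) \<Rightarrow> ('s, 'x) graph \<Rightarrow> bool" where
  "is_subgraph S X \<iota> D \<longleftrightarrow> fst D \<subseteq> grp S \<and> snd D \<subseteq> cayley_edges S X \<iota> \<and>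
     (\<forall>(g, a, h) \<in> snd D. g \<in> fst D \<and> h \<in> fst D \<and> (h, flip a, g) \<in> snd D)"

definition path_span :: "('s, 'z) FIM_scheme \<Rightarrow> ('x \<Rightarrow> 's) \<Rightarrow> 's set \<Rightarrow> 'x word \<Rightarrow> ('s, 'x) graph" where
  "path_span S \<iota> g u =
     ({gmul S g (gw S \<iota> p) | p. \<exists>q. p @ q = u},
      {(gmul S g (gw S \<iota> p), a, gmul S g (gw S \<iota> (p @ [a]))) | p a. \<exists>q. p @ a # q = u} \<union>
      {(gmul S g (gw S \<iota> (p @ [a])), flip a, gmul S g (gw S \<iota> p)) | p a. \<exists>q. p @ a # q = u})"

fun journey_rest :: "('s, 'z) FIM_scheme \<Rightarrow> ('x \<Rightarrow> 's) \<Rightarrow> 's set \<Rightarrow> ('x word \<times> 'x word) list \<Rightarrow> ('s, 'x) graph" where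
  "journey_rest S \<iota> h [] = ({}, {})"
| "journey_rest S \<iota> h ((v, u) # ps) =
     (let h' = gmul S h (gw S \<iota> v)
      in gunion (path_span S \<iota> h' u) (journey_rest S \<iota> (gmul S h' (gw S \<iota> u)) ps))"

definition journey_span :: "('s, 'z) FIM_scheme \<Rightarrow> ('x \<Rightarrow> 's) \<Rightarrow> 's set \<Rightarrow> 'x fterm \<Rightarrow> ('s, 'x) graph" where
  "journey_span S \<iota> g w =
     gunion (path_span S \<iota> g (fst w)) (journey_rest S \<iota> (gmul S g (gw S \<iota> (fst w))) (snd w))"

definition labels_journey :: "('s, 'z) FIM_scheme \<Rightarrow> ('x \<Rightarrow> 's) \<Rightarrow> ('s, 'x) graph \<Rightarrow> 's set \<Rightarrow> 's set \<Rightarrow> 'x fterm \<Rightarrow> bool" where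
  "labels_journey S \<iota> D g h w \<longleftrightarrow>
     gmul S g (cls S (tval S \<iota> w)) = h \<and> gsub (journey_span S \<iota> g w) D"

definition cS_closed :: "('s, 'z) FIM_scheme \<Rightarrow> 'x set \<Rightarrow> ('x \<Rightarrow> 's) \<Rightarrow> ('s, 'x) graph \<Rightarrow> bool" where
  "cS_closed S X \<iota> D \<longleftrightarrow> is_subgraph S X \<iota> D \<and>
     (\<forall>u v. term_over X u \<longrightarrow> term_over X v \<longrightarrow> tval S \<iota> u = tval S \<iota> v \<longrightarrow>
        (\<forall>g \<in> fst D. \<forall>h \<in> fst D. labels_journey S \<iota> D g h u \<longleftrightarrow> labels_journey S \<iota> D g h v))"

definition cS_closure :: "('s, 'z) FIM_scheme \<Rightarrow> 'x set \<Rightarrow> ('x \<Rightarrow> 's) \<Rightarrow> ('s, 'x) graph \<Rightarrow> ('s, 'x) graph" where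
  "cS_closure S X \<iota> D =
     (\<Inter> {fst E | E. cS_closed S X \<iota> E \<and> gsub D E}, \<Inter> {snd E | E. cS_closed S X \<iota> E \<and> gsub D E})"

definition FSchutz :: "('s, 'z) FIM_scheme \<Rightarrow> 'x set \<Rightarrow> ('x \<Rightarrow> 's) \<Rightarrow> 'x fterm \<Rightarrow> ('s, 'x) graph" where
  "FSchutz S X \<iota> w = cS_closure S X \<iota> (journey_span S \<iota> (cls S (sone S)) w)"

end

theory Submission imports Defs begin

locale fim =
  fixes S :: "('s, 'z) FIM_scheme"
  assumes F: "F_inverse_monoid S"
begin

abbreviation mul (infixl "\<cdot>" 70) where "a \<cdot> b \<equiv> smul S a b"
abbreviation one ("\<one>") where "\<one> \<equiv> sone S"
abbreviation inv ("_\<^sup>\<dagger>" [1000] 999) where "a\<^sup>\<dagger> \<equiv> sinv S a"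
abbreviation mx where "mx a \<equiv> smax S a"
abbreviation le where "le a b \<equiv> nat_le S a b"
abbreviation sg where "sg a b \<equiv> sigma S a b"
abbreviation idem where "idem e \<equiv> e \<cdot> e = e"
abbreviation dm where "dm a \<equiv> a \<cdot> a\<^sup>\<dagger>"

lemma IM: "inverse_monoid S" using F unfolding F_inverse_monoid_def by auto

lemma assoc: "(a \<cdot> b) \<cdot> c = a \<cdot> (b \<cdot> c)" using IM unfolding inverse_monoid_def by blast
lemma lone[simp]: "\<one> \<cdot> a = a" using IM unfolding inverse_monoid_def by blast
lemma rone[simp]: "a \<cdot> \<one> = a" using IM unfolding inverse_monoid_def by blast
lemma inv1: "a \<cdot> (a\<^sup>\<dagger> \<cdot> a) = a" using IM unfolding inverse_monoid_def by (simp add: assoc)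
lemma inv2: "a\<^sup>\<dagger> \<cdot> (a \<cdot> a\<^sup>\<dagger>) = a\<^sup>\<dagger>" using IM unfolding inverse_monoid_def by (simp add: assoc)
lemma uniq: "a \<cdot> (b \<cdot> a) = a \<Longrightarrow> b \<cdot> (a \<cdot> b) = b \<Longrightarrow> b = a\<^sup>\<dagger>"
  using IM unfolding inverse_monoid_def by (simp add: assoc)

lemma inv1': "a \<cdot> (a\<^sup>\<dagger> \<cdot> (a \<cdot> x)) = a \<cdot> x" using inv1[of a] by (metis assoc)
lemma inv2': "a\<^sup>\<dagger> \<cdot> (a \<cdot> (a\<^sup>\<dagger> \<cdot> x)) = a\<^sup>\<dagger> \<cdot> x" using inv2[of a] by (metis assoc)

lemmas A = assoc inv1 inv2 inv1' inv2'

lemma inv_inv[simp]: "(a\<^sup>\<dagger>)\<^sup>\<dagger> = a"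
  using uniq[of "a\<^sup>\<dagger>" a] inv1[of a] inv2[of a] by simp

lemma idem_left: "idem e \<Longrightarrow> e \<cdot> (e \<cdot> x) = e \<cdot> x" by (metis assoc)

lemma idem_inv: "idem e \<Longrightarrow> e\<^sup>\<dagger> = e"
  using uniq[of e e] by (simp add: idem_left)

lemma dm_idem: "idem (dm a)" by (simp add: assoc inv1')
lemma dm_idem': "dm a \<cdot> (dm a \<cdot> x) = dm a \<cdot> x" by (simp add: assoc inv1')

lemma comm: assumes e: "idem e" and f: "idem f" shows "e \<cdot> f = f \<cdot> e"
proof -
  define b where "b = f \<cdot> ((e \<cdot> f)\<^sup>\<dagger> \<cdot> e)"
  have 1: "(e \<cdot> f) \<cdot> (b \<cdot> (e \<cdot> f)) = e \<cdot> f"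
    unfolding b_def using inv1[of "e \<cdot> f"] by (simp add: assoc idem_left e f)
  have 2: "b \<cdot> ((e \<cdot> f) \<cdot> b) = b"
    unfolding b_def using inv2'[of "e \<cdot> f" e] by (simp add: assoc idem_left e f)
  have bi: "b = (e \<cdot> f)\<^sup>\<dagger>" using uniq[OF 1 2] .
  have "idem b"
    unfolding b_def using inv2'[of "e \<cdot> f"] by (simp add: assoc idem_left e f)
  hence "b\<^sup>\<dagger> = b" by (rule idem_inv)
  hence ef: "b = e \<cdot> f" using bi by simp
  hence ief: "idem (e \<cdot> f)" using \<open>idem b\<close> by simp
  define c where "c = f \<cdot> ((f \<cdot> e)\<^sup>\<dagger> \<cdot> f)"
  have "idem (f \<cdot> e)"
  proof -
    define b2 where "b2 = e \<cdot> ((f \<cdot> e)\<^sup>\<dagger> \<cdot> f)"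
    have 1: "(f \<cdot> e) \<cdot> (b2 \<cdot> (f \<cdot> e)) = f \<cdot> e"
      unfolding b2_def using inv1[of "f \<cdot> e"] by (simp add: assoc idem_left e f)
    have 2: "b2 \<cdot> ((f \<cdot> e) \<cdot> b2) = b2"
      unfolding b2_def using inv2'[of "f \<cdot> e" f] by (simp add: assoc idem_left e f)
    have bi: "b2 = (f \<cdot> e)\<^sup>\<dagger>" using uniq[OF 1 2] .
    have "idem b2"
      unfolding b2_def using inv2'[of "f \<cdot> e"] by (simp add: assoc idem_left e f)
    hence "b2\<^sup>\<dagger> = b2" by (rule idem_inv)
    thus ?thesis using bi \<open>idem b2\<close> by simp
  qed
  have 3: "(e \<cdot> f) \<cdot> ((f \<cdot> e) \<cdot> (e \<cdot> f)) = e \<cdot> f"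
    using ief by (simp add: assoc idem_left e f)
  have 4: "(f \<cdot> e) \<cdot> ((e \<cdot> f) \<cdot> (f \<cdot> e)) = f \<cdot> e"
    using \<open>idem (f \<cdot> e)\<close> by (simp add: assoc idem_left e f)
  have "f \<cdot> e = (e \<cdot> f)\<^sup>\<dagger>" using uniq[OF 3 4] .
  also have "\<dots> = e \<cdot> f" using idem_inv[OF ief] .
  finally show ?thesis by simp
qed

lemma comm_left: "idem e \<Longrightarrow> idem f \<Longrightarrow> e \<cdot> (f \<cdot> x) = f \<cdot> (e \<cdot> x)"
  by (metis assoc comm)

lemma idem_mul: "idem e \<Longrightarrow> idem f \<Longrightarrow> idem (e \<cdot> f)"
  by (metis assoc comm)

lemma inv_mul: "(a \<cdot> b)\<^sup>\<dagger> = b\<^sup>\<dagger> \<cdot> a\<^sup>\<dagger>"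
proof -
  have c: "a\<^sup>\<dagger> \<cdot> (a \<cdot> (b \<cdot> (b\<^sup>\<dagger> \<cdot> x))) = b \<cdot> (b\<^sup>\<dagger> \<cdot> (a\<^sup>\<dagger> \<cdot> (a \<cdot> x)))" for x
    using comm_left[OF dm_idem[of "a\<^sup>\<dagger>"] dm_idem[of b]] by (simp add: assoc)
  have c2: "b \<cdot> (b\<^sup>\<dagger> \<cdot> (a\<^sup>\<dagger> \<cdot> (a \<cdot> x))) = a\<^sup>\<dagger> \<cdot> (a \<cdot> (b \<cdot> (b\<^sup>\<dagger> \<cdot> x)))" for x using c by simp
  have 1: "(a \<cdot> b) \<cdot> ((b\<^sup>\<dagger> \<cdot> a\<^sup>\<dagger>) \<cdot> (a \<cdot> b)) = a \<cdot> b"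
    by (simp add: A c2)
  have 2: "(b\<^sup>\<dagger> \<cdot> a\<^sup>\<dagger>) \<cdot> ((a \<cdot> b) \<cdot> (b\<^sup>\<dagger> \<cdot> a\<^sup>\<dagger>)) = b\<^sup>\<dagger> \<cdot> a\<^sup>\<dagger>"
    by (simp add: A c)
  show ?thesis using uniq[OF 1 2] by simp
qed

lemma one_inv[simp]: "\<one>\<^sup>\<dagger> = \<one>" using idem_inv[of \<one>] by simp

lemma comm_dm: "idem e \<Longrightarrow> e \<cdot> (b \<cdot> (b\<^sup>\<dagger> \<cdot> x)) = b \<cdot> (b\<^sup>\<dagger> \<cdot> (e \<cdot> x))"
  using comm_left[OF _ dm_idem[of b]] by (simp add: assoc)
lemma comm_dm0: "idem e \<Longrightarrow> e \<cdot> (b \<cdot> b\<^sup>\<dagger>) = b \<cdot> (b\<^sup>\<dagger> \<cdot> e)"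
  using comm[OF _ dm_idem[of b]] by (simp add: assoc)

lemma le_char: "le a b \<longleftrightarrow> a = dm a \<cdot> b"
proof
  assume "le a b"
  then obtain e where e: "idem e" "a = e \<cdot> b" unfolding nat_le_def by blast
  have "dm a = e \<cdot> (b \<cdot> (b\<^sup>\<dagger> \<cdot> e))" using e by (simp add: inv_mul idem_inv assoc)
  also have "\<dots> = e \<cdot> (e \<cdot> dm b)" using comm_dm0[OF e(1), of b] by simp
  also have "\<dots> = e \<cdot> dm b" using idem_left[OF e(1)] by simp
  finally show "a = dm a \<cdot> b" using e by (simp add: A)
next
  assume "a = dm a \<cdot> b" thus "le a b" unfolding nat_le_def using dm_idem by blast
qed

lemma le_refl: "le a a" using le_char by (simp add: assoc inv1)

lemma le_trans: "le a b \<Longrightarrow> le b c \<Longrightarrow> le a c"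
  unfolding nat_le_def by (metis assoc idem_mul)

lemma le_mr: "le a b \<Longrightarrow> le (a \<cdot> c) (b \<cdot> c)"
  unfolding nat_le_def by (metis assoc)

lemma le_ml: assumes "le a b" shows "le (c \<cdot> a) (c \<cdot> b)"
proof -
  obtain e where e: "idem e" "a = e \<cdot> b" using assms unfolding nat_le_def by blast
  have i: "idem (c \<cdot> (e \<cdot> c\<^sup>\<dagger>))"
    using comm_left[OF dm_idem[of "c\<^sup>\<dagger>"] e(1)] by (simp add: A idem_left e)
  have "c \<cdot> a = (c \<cdot> (e \<cdot> c\<^sup>\<dagger>)) \<cdot> (c \<cdot> b)"
    using comm_dm[OF e(1), of "c\<^sup>\<dagger>"] by (simp add: A e)
  thus ?thesis using i unfolding nat_le_def by blast
qed

lemma le_inv: assumes "le a b" shows "le (a\<^sup>\<dagger>) (b\<^sup>\<dagger>)"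
proof -
  obtain e where e: "idem e" "a = e \<cdot> b" using assms unfolding nat_le_def by blast
  have i: "idem (b\<^sup>\<dagger> \<cdot> (e \<cdot> b))"
    using comm_left[OF dm_idem[of "b"] e(1)] by (simp add: A idem_left e)
  have "a\<^sup>\<dagger> = (b\<^sup>\<dagger> \<cdot> (e \<cdot> b)) \<cdot> b\<^sup>\<dagger>"
    using comm_dm[OF e(1), of "b"] comm_dm0[OF e(1), of b] by (simp add: A e inv_mul idem_inv)
  thus ?thesis using i unfolding nat_le_def by blast
qed

lemma idem_antisym: "idem a \<Longrightarrow> idem b \<Longrightarrow> a \<cdot> b = a \<Longrightarrow> b \<cdot> a = b \<Longrightarrow> a = b"
  by (metis comm)

lemma le_dm: assumes "le a b" shows "dm a \<cdot> dm b = dm a"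
proof -
  define f where "f = dm a"
  have fi: "idem f" unfolding f_def by (rule dm_idem)
  have a: "a = f \<cdot> b" using assms le_char f_def by metis
  have "dm a = f \<cdot> (b \<cdot> (b\<^sup>\<dagger> \<cdot> f))" using a by (simp add: assoc inv_mul idem_inv[OF fi])
  also have "\<dots> = f \<cdot> (f \<cdot> dm b)" using comm_dm0[OF fi, of b] by simp
  also have "\<dots> = f \<cdot> dm b" using idem_left[OF fi] by simp
  finally show ?thesis unfolding f_def by simp
qed

lemma le_antisym: assumes "le a b" "le b a" shows "a = b"
proof -
  have "dm a = dm b" using le_dm[OF assms(1)] le_dm[OF assms(2)] idem_antisym dm_idem by metis
  thus ?thesis using assms le_char by (metis assoc inv1)
qed

lemma dm_mul: "dm (x \<cdot> y) \<cdot> dm x = dm (x \<cdot> y)"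
  by (simp add: A inv_mul)

lemma dm_mid: assumes "dm (x \<cdot> (p \<cdot> q)) = dm x" shows "dm (x \<cdot> p) = dm x"
proof -
  have a: "dm (x \<cdot> p) \<cdot> dm x = dm (x \<cdot> p)" by (rule dm_mul)
  have c: "(x \<cdot> p) \<cdot> q = x \<cdot> (p \<cdot> q)" by (rule assoc)
  have b: "dm (x \<cdot> (p \<cdot> q)) \<cdot> dm (x \<cdot> p) = dm (x \<cdot> (p \<cdot> q))" using dm_mul[of "x \<cdot> p" q] unfolding c .
  hence "dm x \<cdot> dm (x \<cdot> p) = dm x" unfolding assms .
  thus ?thesis using a idem_antisym dm_idem by metis
qed

lemma le_right_idem: "idem f \<Longrightarrow> le (b \<cdot> f) b"
proof -
  assume f: "idem f"
  have i: "idem (b \<cdot> (f \<cdot> b\<^sup>\<dagger>))"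
    using comm_dm[OF f, of "b\<^sup>\<dagger>"] by (simp add: A idem_left f)
  have "b \<cdot> f = (b \<cdot> (f \<cdot> b\<^sup>\<dagger>)) \<cdot> b"
    using comm_dm0[OF f, of "b\<^sup>\<dagger>"] by (simp add: A)
  thus ?thesis using i unfolding nat_le_def by blast
qed

lemma le_left_idem: "idem f \<Longrightarrow> le (f \<cdot> b) b"
  unfolding nat_le_def by blast

lemma sg_refl: "sg a a" unfolding sigma_def using le_refl by blast
lemma sg_sym: "sg a b \<Longrightarrow> sg b a" unfolding sigma_def by blast
lemma le_sg: "le a b \<Longrightarrow> sg a b" unfolding sigma_def using le_refl by blast
lemma sg_trans: assumes "sg a b" "sg b c" shows "sg a c"
proof -
  obtain x where x: "le x a" "le x b" using assms(1) unfolding sigma_def by blast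
  obtain y where y: "le y b" "le y c" using assms(2) unfolding sigma_def by blast
  define z where "z = dm x \<cdot> (dm y \<cdot> b)"
  have "z = dm y \<cdot> x" unfolding z_def using x(2) le_char comm_left[OF dm_idem dm_idem] by metis
  hence "le z x" using le_left_idem[OF dm_idem] by simp
  moreover have "z = dm x \<cdot> y" unfolding z_def using y(1) le_char by metis
  hence "le z y" using le_left_idem[OF dm_idem] by simp
  ultimately show ?thesis unfolding sigma_def using x y le_trans by blast
qed
lemma sg_ml: "sg a b \<Longrightarrow> sg (c \<cdot> a) (c \<cdot> b)" unfolding sigma_def using le_ml by blast
lemma sg_mr: "sg a b \<Longrightarrow> sg (a \<cdot> c) (b \<cdot> c)" unfolding sigma_def using le_mr by blast
lemma sg_inv: "sg a b \<Longrightarrow> sg (a\<^sup>\<dagger>) (b\<^sup>\<dagger>)" unfolding sigma_def using le_inv by blast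

lemma mx_sg: "sg (mx a) a" using F unfolding F_inverse_monoid_def by blast
lemma mx_ge: "sg t s \<Longrightarrow> le t (mx s)" using F unfolding F_inverse_monoid_def by blast
lemma mx_eq: "sg a b \<Longrightarrow> mx a = mx b"
  by (meson le_antisym mx_ge mx_sg sg_sym sg_trans)
lemma mx_one: "mx \<one> = \<one>"
proof -
  have "le \<one> (mx \<one>)" using mx_ge sg_refl by blast
  then obtain f where f: "idem f" "\<one> = f \<cdot> mx \<one>" unfolding nat_le_def by blast
  have "f = \<one>" using f by (metis assoc rone)
  thus ?thesis using f by simp
qed
lemma mx_inv: "mx (a\<^sup>\<dagger>) = (mx a)\<^sup>\<dagger>"
proof -
  have 1: "le ((mx a)\<^sup>\<dagger>) (mx (a\<^sup>\<dagger>))" using mx_ge sg_inv[OF mx_sg] by blast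
  have "le ((mx (a\<^sup>\<dagger>))\<^sup>\<dagger>) (mx a)" using mx_ge sg_inv[OF mx_sg[of "a\<^sup>\<dagger>"]] by simp
  hence 2: "le (mx (a\<^sup>\<dagger>)) ((mx a)\<^sup>\<dagger>)" using le_inv by fastforce
  show ?thesis using le_antisym[OF 2 1] .
qed

lemma point_uniq: assumes "dm y = dm z" "sg y z" shows "y = z"
proof -
  have "le y (mx z)" "le z (mx z)" using mx_ge assms(2) sg_refl by auto
  thus ?thesis using assms(1) le_char by metis
qed

lemma jump: assumes "dm y = dm x" "sg y (x \<cdot> v)"
  shows "dm (x \<cdot> mx v) = dm x" "y = x \<cdot> mx v"
proof -
  have "sg (x\<^sup>\<dagger> \<cdot> y) (x\<^sup>\<dagger> \<cdot> (x \<cdot> v))" using sg_ml[OF assms(2)] .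
  moreover have "sg (x\<^sup>\<dagger> \<cdot> (x \<cdot> v)) v" using le_sg[OF le_left_idem[OF dm_idem[of "x\<^sup>\<dagger>"]]] by (simp add: assoc)
  ultimately have "le (x\<^sup>\<dagger> \<cdot> y) (mx v)" using mx_ge sg_trans by blast
  hence l: "le (x \<cdot> (x\<^sup>\<dagger> \<cdot> y)) (x \<cdot> mx v)" by (rule le_ml)
  have "x \<cdot> (x\<^sup>\<dagger> \<cdot> y) = y" using assms(1) by (metis assoc inv1)
  hence l2: "le y (x \<cdot> mx v)" using l by simp
  have "dm y \<cdot> dm (x \<cdot> mx v) = dm y" using le_dm[OF l2] .
  moreover have "dm (x \<cdot> mx v) \<cdot> dm x = dm (x \<cdot> mx v)" by (rule dm_mul)
  ultimately show d: "dm (x \<cdot> mx v) = dm x" using assms(1) idem_antisym dm_idem comm by metis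
  show "y = x \<cdot> mx v" using point_uniq[OF _ le_sg[OF l2]] d assms(1) by simp
qed

end

context fim begin

lemma cls_eq: "cls S a = cls S b \<longleftrightarrow> sg a b"
proof
  assume "cls S a = cls S b"
  hence "b \<in> cls S a" using sg_refl unfolding cls_def by auto
  thus "sg a b" unfolding cls_def by simp
next
  assume "sg a b"
  thus "cls S a = cls S b" unfolding cls_def using sg_sym sg_trans by blast
qed

lemma gmul_cls: "gmul S (cls S x) (cls S y) = cls S (x \<cdot> y)"
proof -
  define a where "a = (SOME a. cls S x = cls S a)"
  define b where "b = (SOME b. cls S y = cls S b)"
  have "cls S x = cls S a" unfolding a_def by (rule someI[of _ x]) simp
  moreover have "cls S y = cls S b" unfolding b_def by (rule someI[of _ y]) simp
  ultimately have "sg (a \<cdot> b) (x \<cdot> y)" unfolding cls_eq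
    by (meson sg_ml sg_mr sg_sym sg_trans)
  thus ?thesis unfolding gmul_def a_def[symmetric] b_def[symmetric] cls_eq[symmetric] by simp
qed

lemma wval_Nil[simp]: "wval S \<iota> [] = \<one>" unfolding wval_def by simp
lemma wval_Cons[simp]: "wval S \<iota> (a # u) = lval S \<iota> a \<cdot> wval S \<iota> u" unfolding wval_def by simp
lemma wval_append[simp]: "wval S \<iota> (u @ v) = wval S \<iota> u \<cdot> wval S \<iota> v"
  by (induction u) (auto simp: assoc)

lemma lval_flip[simp]: "lval S \<iota> (flip a) = (lval S \<iota> a)\<^sup>\<dagger>"
  by (cases a) auto

lemma gmul_gw: "gmul S (cls S x) (gw S \<iota> u) = cls S (x \<cdot> wval S \<iota> u)"
  unfolding gw_def gmul_cls ..

lemma dm_cc: "dm (y \<cdot> c) = dm y \<Longrightarrow> y \<cdot> (c \<cdot> c\<^sup>\<dagger>) = y"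
proof -
  assume a: "dm (y \<cdot> c) = dm y"
  have l: "le (y \<cdot> (c \<cdot> c\<^sup>\<dagger>)) y" using le_right_idem[OF dm_idem] .
  have "dm (y \<cdot> (c \<cdot> c\<^sup>\<dagger>)) = dm (y \<cdot> c)" by (simp add: A inv_mul)
  hence "y \<cdot> (c \<cdot> c\<^sup>\<dagger>) = dm y \<cdot> y" using l le_char a by simp
  thus ?thesis by (simp add: A)
qed

definition DV :: "'s \<Rightarrow> 's set set" where "DV e = {cls S y | y. dm y = e}"
definition DE :: "'x set \<Rightarrow> ('x \<Rightarrow> 's) \<Rightarrow> 's \<Rightarrow> ('s, 'x) edge set" where
  "DE X \<iota> e = {(cls S y, a, cls S (y \<cdot> lval S \<iota> a)) | y a. dm y = e \<and> dm (y \<cdot> lval S \<iota> a) = e \<and> fst a \<in> X}"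
definition Dl :: "'x set \<Rightarrow> ('x \<Rightarrow> 's) \<Rightarrow> 's \<Rightarrow> ('s, 'x) graph" where
  "Dl X \<iota> e = (DV e, DE X \<iota> e)"

lemma DE_rev: "dm y = e \<Longrightarrow> dm (y \<cdot> lval S \<iota> a) = e \<Longrightarrow> fst a \<in> X \<Longrightarrow>
   (cls S (y \<cdot> lval S \<iota> a), flip a, cls S y) \<in> DE X \<iota> e"
proof -
  assume h: "dm y = e" "dm (y \<cdot> lval S \<iota> a) = e" "fst a \<in> X"
  have c: "y \<cdot> (lval S \<iota> a \<cdot> (lval S \<iota> a)\<^sup>\<dagger>) = y" using dm_cc h by simp
  have "fst (flip a) \<in> X" using h(3) by (cases a) auto
  moreover have "cls S y = cls S ((y \<cdot> lval S \<iota> a) \<cdot> lval S \<iota> (flip a))" using c by (simp add: assoc)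
  moreover have "dm ((y \<cdot> lval S \<iota> a) \<cdot> lval S \<iota> (flip a)) = e" using c h by (simp add: assoc)
  ultimately show ?thesis unfolding DE_def using h by blast
qed

lemma path_vert: "p @ q = u \<Longrightarrow> cls S (x \<cdot> wval S \<iota> p) \<in> fst (path_span S \<iota> (cls S x) u)"
  unfolding path_span_def gmul_gw by auto

lemma path_edge: "p @ a # q = u \<Longrightarrow>
   (cls S (x \<cdot> wval S \<iota> p), a, cls S (x \<cdot> wval S \<iota> p \<cdot> lval S \<iota> a)) \<in> snd (path_span S \<iota> (cls S x) u)"
proof -
  assume h: "p @ a # q = u"
  have "(gmul S (cls S x) (gw S \<iota> p), a, gmul S (cls S x) (gw S \<iota> (p @ [a]))) \<in> snd (path_span S \<iota> (cls S x) u)"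
    unfolding path_span_def snd_conv using h by blast
  thus ?thesis unfolding gmul_gw by (simp add: assoc)
qed

lemma path_A:
  assumes x: "dm x = e" and w: "word_over X u" and d: "dm (x \<cdot> wval S \<iota> u) = e"
  shows "gsub (path_span S \<iota> (cls S x) u) (Dl X \<iota> e)"
proof -
  have pre: "dm (x \<cdot> wval S \<iota> p) = e" if "p @ q = u" for p q
    using d x dm_mid[of x "wval S \<iota> p" "wval S \<iota> q"] that by auto
  have ed: "(cls S (x \<cdot> wval S \<iota> p), a, cls S (x \<cdot> wval S \<iota> p \<cdot> lval S \<iota> a)) \<in> DE X \<iota> e
    \<and> (cls S (x \<cdot> wval S \<iota> p \<cdot> lval S \<iota> a), flip a, cls S (x \<cdot> wval S \<iota> p)) \<in> DE X \<iota> e"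
    if "p @ a # q = u" for p a q
  proof -
    have 1: "dm (x \<cdot> wval S \<iota> p) = e" using pre[of p "a # q"] that by simp
    have 2: "dm (x \<cdot> wval S \<iota> p \<cdot> lval S \<iota> a) = e" using pre[of "p @ [a]" q] that by (simp add: assoc)
    have 3: "fst a \<in> X" using w that unfolding word_over_def by auto
    show ?thesis using 1 2 3 DE_rev[OF 1 2 3] unfolding DE_def by blast
  qed
  have V: "fst (path_span S \<iota> (cls S x) u) \<subseteq> DV e"
  proof
    fix z assume "z \<in> fst (path_span S \<iota> (cls S x) u)"
    then obtain p q where z: "z = gmul S (cls S x) (gw S \<iota> p)" "p @ q = u" unfolding path_span_def by auto
    show "z \<in> DV e" unfolding DV_def z(1) gmul_gw using pre[OF z(2)] by blast
  qed
  have E: "snd (path_span S \<iota> (cls S x) u) \<subseteq> DE X \<iota> e"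
  proof
    fix z assume "z \<in> snd (path_span S \<iota> (cls S x) u)"
    then obtain p a q where "p @ a # q = u" and
      "z = (gmul S (cls S x) (gw S \<iota> p), a, gmul S (cls S x) (gw S \<iota> (p @ [a]))) \<or>
       z = (gmul S (cls S x) (gw S \<iota> (p @ [a])), flip a, gmul S (cls S x) (gw S \<iota> p))"
      unfolding path_span_def snd_conv by blast
    thus "z \<in> DE X \<iota> e" using ed[of p a q] unfolding gmul_gw by (auto simp: assoc)
  qed
  show ?thesis unfolding gsub_def Dl_def using V E by simp
qed

lemma path_B:
  assumes x: "dm x = e" and g: "gsub (path_span S \<iota> (cls S x) u) (Dl X \<iota> e)"
  shows "dm (x \<cdot> wval S \<iota> u) = e"
proof -
  have "p @ q = u \<longrightarrow> dm (x \<cdot> wval S \<iota> p) = e" for p q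
  proof (induction p arbitrary: q rule: rev_induct)
    case Nil then show ?case using x by simp
  next
    case (snoc a p)
    show ?case
    proof
      assume pq: "(p @ [a]) @ q = u"
      hence ih: "dm (x \<cdot> wval S \<iota> p) = e" using snoc.IH[of "a # q"] by simp
      have "(cls S (x \<cdot> wval S \<iota> p), a, cls S (x \<cdot> wval S \<iota> p \<cdot> lval S \<iota> a)) \<in> DE X \<iota> e"
        using path_edge[of p a q u x] pq g unfolding gsub_def Dl_def by auto
      then obtain y where y: "cls S y = cls S (x \<cdot> wval S \<iota> p)" "dm y = e" "dm (y \<cdot> lval S \<iota> a) = e"
        unfolding DE_def by auto
      have "y = x \<cdot> wval S \<iota> p" using point_uniq y ih cls_eq by metis
      thus "dm (x \<cdot> wval S \<iota> (p @ [a])) = e" using y by (simp add: assoc)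
    qed
  qed
  thus ?thesis by (metis append_Nil2)
qed


lemma dm_pref: "dm (x \<cdot> (p \<cdot> q)) = e \<Longrightarrow> dm x = e \<Longrightarrow> dm (x \<cdot> p) = e"
  using dm_mid by metis

definition Rv :: "('x \<Rightarrow> 's) \<Rightarrow> ('x word \<times> 'x word) list \<Rightarrow> 's" where
  "Rv \<iota> ps = foldr (\<lambda>p r. smul S (smul S (smax S (wval S \<iota> (fst p))) (wval S \<iota> (snd p))) r) ps (sone S)"

lemma Rv_Nil[simp]: "Rv \<iota> [] = \<one>" unfolding Rv_def by simp
lemma Rv_Cons[simp]: "Rv \<iota> ((v, u) # ps) = mx (wval S \<iota> v) \<cdot> (wval S \<iota> u \<cdot> Rv \<iota> ps)"
  unfolding Rv_def by (simp add: assoc)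
lemma tval_Rv: "tval S \<iota> w = wval S \<iota> (fst w) \<cdot> Rv \<iota> (snd w)"
  unfolding tval_def Rv_def ..

lemma gsub_gunion: "gsub (gunion A B) D \<longleftrightarrow> gsub A D \<and> gsub B D"
  unfolding gsub_def gunion_def by auto

lemma cls_mx: "cls S (x \<cdot> wval S \<iota> v) = cls S (x \<cdot> mx (wval S \<iota> v))"
  unfolding cls_eq using sg_ml[OF sg_sym[OF mx_sg]] .

lemma JR:
  assumes "dm x = e" and "\<forall>p \<in> set ps. word_over X (snd p)"
  shows "gsub (journey_rest S \<iota> (cls S x) ps) (Dl X \<iota> e) \<longleftrightarrow> dm (x \<cdot> Rv \<iota> ps) = e"
  using assms
proof (induction ps arbitrary: x)
  case Nil
  then show ?case by (simp add: gsub_def)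
next
  case (Cons p ps)
  obtain v u where p: "p = (v, u)" by (cases p)
  define x1 where "x1 = x \<cdot> mx (wval S \<iota> v)"
  have h1: "gmul S (cls S x) (gw S \<iota> v) = cls S x1" unfolding x1_def gmul_gw cls_mx ..
  have h2: "gmul S (cls S x1) (gw S \<iota> u) = cls S (x1 \<cdot> wval S \<iota> u)" unfolding gmul_gw ..
  have wu: "word_over X u" using Cons.prems p by simp
  have wps: "\<forall>p \<in> set ps. word_over X (snd p)" using Cons.prems by simp
  have jr: "journey_rest S \<iota> (cls S x) (p # ps) =
      gunion (path_span S \<iota> (cls S x1) u) (journey_rest S \<iota> (cls S (x1 \<cdot> wval S \<iota> u)) ps)"
    using p h1 h2 by simp
  have val: "x \<cdot> Rv \<iota> (p # ps) = x1 \<cdot> wval S \<iota> u \<cdot> Rv \<iota> ps" unfolding x1_def p by (simp add: assoc)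
  show ?case
  proof
    assume g: "gsub (journey_rest S \<iota> (cls S x) (p # ps)) (Dl X \<iota> e)"
    hence g1: "gsub (path_span S \<iota> (cls S x1) u) (Dl X \<iota> e)"
      and g2: "gsub (journey_rest S \<iota> (cls S (x1 \<cdot> wval S \<iota> u)) ps) (Dl X \<iota> e)"
      unfolding jr gsub_gunion by auto
    have "cls S x1 \<in> DV e" using path_vert[of "[]" u u x1] g1 unfolding gsub_def Dl_def by auto
    then obtain y where y: "cls S y = cls S x1" "dm y = e" unfolding DV_def by auto
    have "sg y (x \<cdot> wval S \<iota> v)" using y(1) unfolding x1_def cls_mx[symmetric] cls_eq .
    hence d1: "dm x1 = e" unfolding x1_def using jump(1)[of y x] y(2) Cons.prems(1) by simp
    have d2: "dm (x1 \<cdot> wval S \<iota> u) = e" using path_B[OF d1 g1] .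
    show "dm (x \<cdot> Rv \<iota> (p # ps)) = e" unfolding val using Cons.IH[OF d2 wps] g2 by simp
  next
    assume d: "dm (x \<cdot> Rv \<iota> (p # ps)) = e"
    have d3: "dm (x1 \<cdot> wval S \<iota> u \<cdot> Rv \<iota> ps) = e" using d val by simp
    have d1: "dm x1 = e" unfolding x1_def
      using dm_pref[of x "mx (wval S \<iota> v)" "wval S \<iota> u \<cdot> Rv \<iota> ps" e] d Cons.prems(1) p by simp
    have d2: "dm (x1 \<cdot> wval S \<iota> u) = e"
      using dm_pref[of x1 "wval S \<iota> u" "Rv \<iota> ps" e] d3 d1 by (simp add: assoc)
    show "gsub (journey_rest S \<iota> (cls S x) (p # ps)) (Dl X \<iota> e)"
      unfolding jr gsub_gunion using path_A[OF d1 wu d2] Cons.IH[OF d2 wps] d3 by simp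
  qed
qed


lemma jr_cons: "journey_rest S \<iota> (cls S x) ((v, u) # ps) =
      gunion (path_span S \<iota> (cls S (x \<cdot> mx (wval S \<iota> v))) u)
        (journey_rest S \<iota> (cls S (x \<cdot> mx (wval S \<iota> v) \<cdot> wval S \<iota> u)) ps)"
proof -
  have h1: "gmul S (cls S x) (gw S \<iota> v) = cls S (x \<cdot> mx (wval S \<iota> v))" by (simp only: gmul_gw cls_mx)
  have h2: "gmul S (cls S (x \<cdot> mx (wval S \<iota> v))) (gw S \<iota> u) = cls S (x \<cdot> mx (wval S \<iota> v) \<cdot> wval S \<iota> u)"
    by (simp only: gmul_gw)
  show ?thesis by (simp only: journey_rest.simps Let_def h1 h2)
qed

lemma js_eq: "journey_span S \<iota> (cls S x) t =
   gunion (path_span S \<iota> (cls S x) (fst t)) (journey_rest S \<iota> (cls S (x \<cdot> wval S \<iota> (fst t))) (snd t))"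
  unfolding journey_span_def gmul_gw ..

lemma JS:
  assumes x: "dm x = e" and t: "term_over X t"
  shows "gsub (journey_span S \<iota> (cls S x) t) (Dl X \<iota> e) \<longleftrightarrow> dm (x \<cdot> tval S \<iota> t) = e"
proof -
  have w0: "word_over X (fst t)" and wps: "\<forall>p \<in> set (snd t). word_over X (snd p)"
    using t unfolding term_over_def by auto
  show ?thesis
  proof
    assume g: "gsub (journey_span S \<iota> (cls S x) t) (Dl X \<iota> e)"
    hence g1: "gsub (path_span S \<iota> (cls S x) (fst t)) (Dl X \<iota> e)"
      and g2: "gsub (journey_rest S \<iota> (cls S (x \<cdot> wval S \<iota> (fst t))) (snd t)) (Dl X \<iota> e)"
      unfolding js_eq gsub_gunion by auto
    have d1: "dm (x \<cdot> wval S \<iota> (fst t)) = e" using path_B[OF x g1] .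
    show "dm (x \<cdot> tval S \<iota> t) = e" using JR[OF d1 wps] g2 unfolding tval_Rv by (simp add: assoc)
  next
    assume d: "dm (x \<cdot> tval S \<iota> t) = e"
    have d1: "dm (x \<cdot> wval S \<iota> (fst t)) = e"
      using dm_pref[of x "wval S \<iota> (fst t)" "Rv \<iota> (snd t)" e] d x unfolding tval_Rv by simp
    show "gsub (journey_span S \<iota> (cls S x) t) (Dl X \<iota> e)"
      unfolding js_eq gsub_gunion using path_A[OF x w0 d1] JR[OF d1 wps] d unfolding tval_Rv
      by (simp add: assoc)
  qed
qed

lemma Dl_closed: "cS_closed S X \<iota> (Dl X \<iota> e)"
proof -
  have sub: "is_subgraph S X \<iota> (Dl X \<iota> e)"
  proof -
    have 1: "fst (Dl X \<iota> e) \<subseteq> grp S" unfolding Dl_def DV_def grp_def by auto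
    have 2: "snd (Dl X \<iota> e) \<subseteq> cayley_edges S X \<iota>"
    proof
      fix z assume "z \<in> snd (Dl X \<iota> e)"
      then obtain y a where z: "z = (cls S y, a, cls S (y \<cdot> lval S \<iota> a))" "fst a \<in> X"
        unfolding Dl_def DE_def by auto
      have "cls S (y \<cdot> lval S \<iota> a) = gmul S (cls S y) (cls S (lval S \<iota> a))" by (simp add: gmul_cls)
      moreover have "cls S y \<in> grp S" unfolding grp_def by simp
      ultimately show "z \<in> cayley_edges S X \<iota>" unfolding cayley_edges_def z(1) using z(2) by blast
    qed
    have 3: "\<forall>(g, a, h) \<in> snd (Dl X \<iota> e). g \<in> fst (Dl X \<iota> e) \<and> h \<in> fst (Dl X \<iota> e) \<and> (h, flip a, g) \<in> snd (Dl X \<iota> e)"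
    proof (clarify)
      fix g a h assume "(g, a, h) \<in> snd (Dl X \<iota> e)"
      then obtain y where y: "g = cls S y" "h = cls S (y \<cdot> lval S \<iota> a)" "dm y = e"
        "dm (y \<cdot> lval S \<iota> a) = e" "fst a \<in> X" unfolding Dl_def DE_def by auto
      show "g \<in> fst (Dl X \<iota> e) \<and> h \<in> fst (Dl X \<iota> e) \<and> (h, flip a, g) \<in> snd (Dl X \<iota> e)"
        unfolding Dl_def DV_def using y DE_rev[OF y(3,4,5)] by auto
    qed
    show ?thesis unfolding is_subgraph_def using 1 2 3 by blast
  qed
  have cl: "labels_journey S \<iota> (Dl X \<iota> e) g h u \<longleftrightarrow> labels_journey S \<iota> (Dl X \<iota> e) g h v"
    if tu: "term_over X u" and tv: "term_over X v" and eq: "tval S \<iota> u = tval S \<iota> v"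
      and gv: "g \<in> fst (Dl X \<iota> e)" for u v g h
  proof -
    obtain y where y: "g = cls S y" "dm y = e" using gv unfolding Dl_def DV_def by auto
    show ?thesis unfolding labels_journey_def y(1) using JS[OF y(2) tu] JS[OF y(2) tv] eq by simp
  qed
  show ?thesis unfolding cS_closed_def using sub cl by blast
qed


lemma Rv_append: "Rv \<iota> (ps @ qs) = Rv \<iota> ps \<cdot> Rv \<iota> qs"
  unfolding Rv_def by (induction ps) (auto simp: assoc)

definition tcat :: "'x fterm \<Rightarrow> 'x fterm \<Rightarrow> 'x fterm" where
  "tcat a b = (fst a, snd a @ ([], fst b) # snd b)"

lemma tval_tcat: "tval S \<iota> (tcat a b) = tval S \<iota> a \<cdot> tval S \<iota> b"
  unfolding tval_Rv tcat_def by (simp add: Rv_append Rv_def[symmetric] mx_one assoc)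

lemma word_over_Nil[simp]: "word_over X []" by (simp add: word_over_def)

lemma term_over_tcat: "term_over X a \<Longrightarrow> term_over X b \<Longrightarrow> term_over X (tcat a b)"
  unfolding term_over_def tcat_def by auto

definition winv :: "'x word \<Rightarrow> 'x word" where "winv u = rev (map flip u)"

lemma wval_winv: "wval S \<iota> (winv u) = (wval S \<iota> u)\<^sup>\<dagger>"
  unfolding winv_def by (induction u) (auto simp: inv_mul)

lemma fst_flip[simp]: "fst (flip a) = fst a" by (cases a) auto

lemma word_over_winv: "word_over X u \<Longrightarrow> word_over X (winv u)"
  unfolding word_over_def winv_def by auto

fun sinvl :: "('x word \<times> 'x word) list \<Rightarrow> ('x word \<times> 'x word) list" where
  "sinvl [] = []"
| "sinvl ((v, u) # ps) = sinvl ps @ [([], winv u), (winv v, [])]"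

lemma Rv_sinvl: "Rv \<iota> (sinvl ps) = (Rv \<iota> ps)\<^sup>\<dagger>"
proof (induction ps rule: sinvl.induct)
  case 1 then show ?case by simp
next
  case (2 v u ps)
  then show ?case by (simp add: Rv_append wval_winv mx_one mx_inv inv_mul assoc)
qed

definition tinv :: "'x fterm \<Rightarrow> 'x fterm" where
  "tinv t = ([], sinvl (snd t) @ [([], winv (fst t))])"

lemma tval_tinv: "tval S \<iota> (tinv t) = (tval S \<iota> t)\<^sup>\<dagger>"
  unfolding tval_Rv tinv_def by (simp add: Rv_append Rv_sinvl wval_winv mx_one inv_mul)

lemma term_over_sinvl: "\<forall>p \<in> set ps. word_over X (fst p) \<and> word_over X (snd p) \<Longrightarrow>
   \<forall>p \<in> set (sinvl ps). word_over X (fst p) \<and> word_over X (snd p)"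
proof (induction ps rule: sinvl.induct)
  case 1 then show ?case by simp
next
  case (2 v u ps)
  have "word_over X v" "word_over X u" "\<forall>p \<in> set ps. word_over X (fst p) \<and> word_over X (snd p)"
    using "2.prems" by auto
  then show ?case using "2.IH" by (simp add: word_over_winv)
qed

lemma term_over_tinv: "term_over X t \<Longrightarrow> term_over X (tinv t)"
proof -
  assume t: "term_over X t"
  hence "\<forall>p \<in> set (sinvl (snd t)). word_over X (fst p) \<and> word_over X (snd p)"
    "word_over X (winv (fst t))"
    using term_over_sinvl word_over_winv unfolding term_over_def by blast+
  thus ?thesis unfolding term_over_def tinv_def by simp
qed

lemma jr_mono: "fst (journey_rest S \<iota> h ps) \<subseteq> fst (journey_rest S \<iota> h (ps @ qs)) \<and>
   snd (journey_rest S \<iota> h ps) \<subseteq> snd (journey_rest S \<iota> h (ps @ qs))"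
proof (induction ps arbitrary: h)
  case Nil then show ?case by simp
next
  case (Cons p ps)
  obtain v u where p: "p = (v, u)" by (cases p)
  define h2 where "h2 = gmul S (gmul S h (gw S \<iota> v)) (gw S \<iota> u)"
  define P where "P = path_span S \<iota> (gmul S h (gw S \<iota> v)) u"
  have e1: "journey_rest S \<iota> h (p # ps) = gunion P (journey_rest S \<iota> h2 ps)"
    unfolding p h2_def P_def journey_rest.simps Let_def ..
  have e2: "journey_rest S \<iota> h ((p # ps) @ qs) = gunion P (journey_rest S \<iota> h2 (ps @ qs))"
    unfolding p h2_def P_def append_Cons journey_rest.simps Let_def ..
  show ?case unfolding e1 e2 using Cons.IH[of h2] unfolding gunion_def fst_conv snd_conv by blast
qed

lemma js_mono: "gsub (journey_span S \<iota> g (tcat a b)) D \<Longrightarrow> gsub (journey_span S \<iota> g a) D"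
proof -
  assume g: "gsub (journey_span S \<iota> g (tcat a b)) D"
  define h where "h = gmul S g (gw S \<iota> (fst a))"
  have e1: "journey_span S \<iota> g (tcat a b) = gunion (path_span S \<iota> g (fst a)) (journey_rest S \<iota> h (snd a @ ([], fst b) # snd b))"
    unfolding journey_span_def tcat_def h_def fst_conv snd_conv ..
  have e2: "journey_span S \<iota> g a = gunion (path_span S \<iota> g (fst a)) (journey_rest S \<iota> h (snd a))"
    unfolding journey_span_def h_def ..
  from g have "gsub (path_span S \<iota> g (fst a)) D" "gsub (journey_rest S \<iota> h (snd a @ ([], fst b) # snd b)) D"
    unfolding e1 gsub_gunion by auto
  thus ?thesis unfolding e2 gsub_gunion
    using jr_mono[where h=h and ps="snd a" and qs="([], fst b) # snd b" and \<iota>=\<iota>] unfolding gsub_def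
    by blast
qed

lemma JR_end: "cls S (x \<cdot> Rv \<iota> ps) \<in> fst (journey_rest S \<iota> (cls S x) ps) \<or> cls S (x \<cdot> Rv \<iota> ps) = cls S x"
proof (induction ps arbitrary: x)
  case Nil then show ?case by simp
next
  case (Cons p ps)
  obtain v u where p: "p = (v, u)" by (cases p)
  define x1 where "x1 = x \<cdot> mx (wval S \<iota> v)"
  have val: "x \<cdot> Rv \<iota> (p # ps) = x1 \<cdot> wval S \<iota> u \<cdot> Rv \<iota> ps" unfolding x1_def p by (simp add: assoc)
  have "cls S (x1 \<cdot> wval S \<iota> u) \<in> fst (path_span S \<iota> (cls S x1) u)" using path_vert[of u "[]" u x1] by simp
  moreover have jr: "journey_rest S \<iota> (cls S x) (p # ps) =
     gunion (path_span S \<iota> (cls S x1) u) (journey_rest S \<iota> (cls S (x1 \<cdot> wval S \<iota> u)) ps)"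
    unfolding p jr_cons x1_def ..
  moreover note Cons.IH[of "x1 \<cdot> wval S \<iota> u"]
  ultimately have "cls S (x \<cdot> Rv \<iota> (p # ps)) \<in> fst (journey_rest S \<iota> (cls S x) (p # ps))"
    unfolding val gunion_def fst_conv by auto
  thus ?case ..
qed

lemma JS_end: "cls S (x \<cdot> tval S \<iota> t) \<in> fst (journey_span S \<iota> (cls S x) t)"
  using JR_end[where x="x \<cdot> wval S \<iota> (fst t)" and ps="snd t" and \<iota>=\<iota>] path_vert[of "fst t" "[]" "fst t" x]
  unfolding js_eq tval_Rv by (auto simp: gunion_def assoc)


lemma main_loc:
  assumes tw: "term_over X w" and tu: "term_over X u"
  shows "labels_journey S \<iota> (FSchutz S X \<iota> w) (cls S \<one>) (cls S (tval S \<iota> w)) u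
         \<longleftrightarrow> le (tval S \<iota> w) (tval S \<iota> u)"
proof -
  define W where "W = tval S \<iota> w"
  define U where "U = tval S \<iota> u"
  define D where "D = journey_span S \<iota> (cls S \<one>) w"
  have FS: "FSchutz S X \<iota> w = (\<Inter> {fst E | E. cS_closed S X \<iota> E \<and> gsub D E}, \<Inter> {snd E | E. cS_closed S X \<iota> E \<and> gsub D E})"
    unfolding FSchutz_def cS_closure_def D_def ..
  show ?thesis unfolding W_def[symmetric] U_def[symmetric]
  proof
    assume L: "labels_journey S \<iota> (FSchutz S X \<iota> w) (cls S \<one>) (cls S W) u"
    define e where "e = dm W"
    have ei: "idem e" unfolding e_def by (rule dm_idem)
    have ce: "cls S \<one> = cls S e" unfolding cls_eq
      using le_sg[OF le_left_idem[OF ei, of \<one>]] sg_sym by simp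
    have de: "dm e = e" using idem_inv[OF ei] ei by simp
    have eW: "e \<cdot> W = W" unfolding e_def by (simp add: A)
    have dW: "dm W = e" unfolding e_def ..
    have Dsub: "gsub D (Dl X \<iota> e)" unfolding D_def ce using JS[OF de tw] eW dW unfolding W_def by simp
    have m1: "fst (Dl X \<iota> e) \<in> {fst E |E. cS_closed S X \<iota> E \<and> gsub D E}"
      using Dl_closed[of X \<iota> e] Dsub by blast
    have m2: "snd (Dl X \<iota> e) \<in> {snd E |E. cS_closed S X \<iota> E \<and> gsub D E}"
      using Dl_closed[of X \<iota> e] Dsub by blast
    have f1: "fst (FSchutz S X \<iota> w) \<subseteq> fst (Dl X \<iota> e)" unfolding FS fst_conv by (rule Inter_lower[OF m1])
    have f2: "snd (FSchutz S X \<iota> w) \<subseteq> snd (Dl X \<iota> e)" unfolding FS snd_conv by (rule Inter_lower[OF m2])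
    have Fsub: "gsub (FSchutz S X \<iota> w) (Dl X \<iota> e)" unfolding gsub_def using f1 f2 by simp
    from L have g1: "gmul S (cls S \<one>) (cls S U) = cls S W"
      and g2: "gsub (journey_span S \<iota> (cls S \<one>) u) (FSchutz S X \<iota> w)"
      unfolding labels_journey_def U_def by auto
    have "gsub (journey_span S \<iota> (cls S e) u) (Dl X \<iota> e)" using g2 Fsub ce unfolding gsub_def by auto
    hence d: "dm (e \<cdot> U) = e" using JS[OF de tu] U_def by simp
    have sUW: "sg U W" using g1 unfolding gmul_cls cls_eq by simp
    have "sg (e \<cdot> U) W" using sg_trans[OF le_sg[OF le_left_idem[OF ei]] sUW] .
    moreover have "dm (e \<cdot> U) = dm W" using d dW by simp
    ultimately have "e \<cdot> U = W" using point_uniq by blast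
    thus "le W U" unfolding nat_le_def using ei by blast
  next
    assume le: "le W U"
    have sWU: "sg W U" using le_sg[OF le] .
    have c1: "gmul S (cls S \<one>) (cls S U) = cls S W" unfolding gmul_cls cls_eq using sg_sym[OF sWU] by simp
    define v where "v = tcat u (tcat (tinv u) w)"
    have tv: "term_over X v" unfolding v_def using term_over_tcat term_over_tinv tu tw by blast
    have Wd: "W = dm W \<cdot> U" using le unfolding le_char .
    have "tval S \<iota> v = U \<cdot> (U\<^sup>\<dagger> \<cdot> W)" unfolding v_def tval_tcat tval_tinv U_def W_def ..
    also have "\<dots> = U \<cdot> (U\<^sup>\<dagger> \<cdot> (dm W \<cdot> U))" using Wd by simp
    also have "\<dots> = dm W \<cdot> (U \<cdot> (U\<^sup>\<dagger> \<cdot> U))" using comm_dm[OF dm_idem[of W], of U U] by (simp add: assoc)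
    also have "\<dots> = W" using Wd by (simp add: A)
    finally have vW: "tval S \<iota> v = W" .
    have v1: "cls S \<one> \<in> fst D"
      using path_vert[of "[]" "fst w" "fst w" "\<one>" \<iota>] unfolding D_def js_eq gunion_def by simp
    have v2: "cls S W \<in> fst D" using JS_end[of "\<one>" \<iota> w] unfolding D_def W_def by simp
    have key: "gsub (journey_span S \<iota> (cls S \<one>) u) E" if E: "cS_closed S X \<iota> E" "gsub D E" for E
    proof -
      have "fst D \<subseteq> fst E" using E(2) unfolding gsub_def by simp
      hence vs: "cls S \<one> \<in> fst E" "cls S W \<in> fst E" using v1 v2 by auto
      have "labels_journey S \<iota> E (cls S \<one>) (cls S W) w"
        unfolding labels_journey_def using E(2) unfolding D_def W_def gmul_cls by simp
      moreover have cl: "\<forall>u v. term_over X u \<longrightarrow> term_over X v \<longrightarrow> tval S \<iota> u = tval S \<iota> v \<longrightarrow>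
        (\<forall>g \<in> fst E. \<forall>h \<in> fst E. labels_journey S \<iota> E g h u \<longleftrightarrow> labels_journey S \<iota> E g h v)"
        using E(1) unfolding cS_closed_def by blast
      moreover have "tval S \<iota> w = tval S \<iota> v" using vW W_def by simp
      ultimately have "labels_journey S \<iota> E (cls S \<one>) (cls S W) v"
        using cl tw tv vs by blast
      hence "gsub (journey_span S \<iota> (cls S \<one>) v) E" unfolding labels_journey_def by simp
      thus ?thesis unfolding v_def by (rule js_mono)
    qed
    have k1: "fst (journey_span S \<iota> (cls S \<one>) u) \<subseteq> fst (FSchutz S X \<iota> w)"
      unfolding FS fst_conv using key unfolding gsub_def by blast
    have k2: "snd (journey_span S \<iota> (cls S \<one>) u) \<subseteq> snd (FSchutz S X \<iota> w)"
      unfolding FS snd_conv using key unfolding gsub_def by blast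
    have "gsub (journey_span S \<iota> (cls S \<one>) u) (FSchutz S X \<iota> w)"
      unfolding gsub_def using k1 k2 by simp
    thus "labels_journey S \<iota> (FSchutz S X \<iota> w) (cls S \<one>) (cls S W) u"
      unfolding labels_journey_def using c1 U_def by simp
  qed
qed

end

theorem mainTheorem4:
  fixes S :: "'s FIM" and X :: "'x set" and \<iota> :: "'x \<Rightarrow> 's"
    and w u :: "'x fterm"
  assumes "F_inverse_monoid S"
    and "X_generated S X \<iota>"
    and "term_over X w"
    and "term_over X u"
  shows "labels_journey S \<iota> (FSchutz S X \<iota> w) (cls S (sone S)) (cls S (tval S \<iota> w)) u
         \<longleftrightarrow> nat_le S (tval S \<iota> w) (tval S \<iota> u)"
proof -
  interpret fim S by (rule fim.intro) (rule assms(1))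
  show ?thesis using main_loc[OF assms(3,4)] .
qed

end
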